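(* Let $T$ be an iso-unique zero forcing tree and let $\mathcal{P}$ be a minimum path cover of $T$. If $e=xy$ is a connector edge of $\mathcal{P}$, then either both $x$ and $y$ are interior connector vertices, or one of them is interior and the other is the only vertex of a path from $\mathcal{P}$.
   Context: Zero forcing: in a graph $G$, starting with an initial set $S\subseteq V(G)$ of active vertices, repeatedly apply the rule: if an active vertex $u$ has exactly one non-active neighbor $v$, then $v$ becomes active. $S$ is a zero forcing set if eventually all vertices become active; a minimum zero forcing set is one of minimum size. A graph is an iso-unique zero forcing graph if for every two minimum zero forcing sets $A,B$ there is an automorphism $\phi$ with $\phi(A)=B$. A path cover of a tree $T$ is a set of vertex-disjoint paths of $T$ (a single vertex counts as a path) covering all vertices of $T$; it is minimum if no path cover has fewer paths. For a path cover $\mathcal{P}$, an edge $xy$ with $x,y$ in different paths of $\mathcal{P}$ is a connector edge and $x,y$ are connector vertices; a connector vertex is interior if it is an interior (non-end) vertex of its path in $\mathcal{P}$. *)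

theory Defs
  imports Main
begin

definition graph :: "'a set \<Rightarrow> ('a \<Rightarrow> 'a \<Rightarrow> bool) \<Rightarrow> bool" where
  "graph V E \<longleftrightarrow> finite V \<and> (\<forall>x y. E x y \<longrightarrow> x \<in> V \<and> y \<in> V)
      \<and> (\<forall>x y. E x y \<longrightarrow> E y x) \<and> (\<forall>x. \<not> E x x)"

definition connected :: "'a set \<Rightarrow> ('a \<Rightarrow> 'a \<Rightarrow> bool) \<Rightarrow> bool" where
  "connected V E \<longleftrightarrow> (\<forall>x\<in>V. \<forall>y\<in>V. E\<^sup>*\<^sup>* x y)"

fun is_walk :: "('a \<Rightarrow> 'a \<Rightarrow> bool) \<Rightarrow> 'a list \<Rightarrow> bool" where
  "is_walk E [] = False"
| "is_walk E [x] = True"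
| "is_walk E (x # y # zs) = (E x y \<and> is_walk E (y # zs))"

definition is_path :: "'a set \<Rightarrow> ('a \<Rightarrow> 'a \<Rightarrow> bool) \<Rightarrow> 'a list \<Rightarrow> bool" where
  "is_path V E p \<longleftrightarrow> is_walk E p \<and> distinct p \<and> set p \<subseteq> V"

definition is_cycle :: "'a set \<Rightarrow> ('a \<Rightarrow> 'a \<Rightarrow> bool) \<Rightarrow> 'a list \<Rightarrow> bool" where
  "is_cycle V E c \<longleftrightarrow> is_path V E c \<and> length c \<ge> 3 \<and> E (last c) (hd c)"

definition tree :: "'a set \<Rightarrow> ('a \<Rightarrow> 'a \<Rightarrow> bool) \<Rightarrow> bool" where
  "tree V E \<longleftrightarrow> graph V E \<and> V \<noteq> {} \<and> connected V E \<and> (\<nexists>c. is_cycle V E c)"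

definition force_step :: "'a set \<Rightarrow> ('a \<Rightarrow> 'a \<Rightarrow> bool) \<Rightarrow> 'a set \<Rightarrow> 'a set \<Rightarrow> bool" where
  "force_step V E A B \<longleftrightarrow>
     (\<exists>u\<in>A. \<exists>v. {w \<in> V. E u w \<and> w \<notin> A} = {v} \<and> B = insert v A)"

definition zero_forcing_set :: "'a set \<Rightarrow> ('a \<Rightarrow> 'a \<Rightarrow> bool) \<Rightarrow> 'a set \<Rightarrow> bool" where
  "zero_forcing_set V E S \<longleftrightarrow> S \<subseteq> V \<and> (force_step V E)\<^sup>*\<^sup>* S V"

definition min_zero_forcing_set :: "'a set \<Rightarrow> ('a \<Rightarrow> 'a \<Rightarrow> bool) \<Rightarrow> 'a set \<Rightarrow> bool" where
  "min_zero_forcing_set V E S \<longleftrightarrow> zero_forcing_set V E S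
      \<and> (\<forall>S'. zero_forcing_set V E S' \<longrightarrow> card S \<le> card S')"

definition automorphism :: "'a set \<Rightarrow> ('a \<Rightarrow> 'a \<Rightarrow> bool) \<Rightarrow> ('a \<Rightarrow> 'a) \<Rightarrow> bool" where
  "automorphism V E \<phi> \<longleftrightarrow> bij_betw \<phi> V V \<and> (\<forall>x\<in>V. \<forall>y\<in>V. E x y \<longleftrightarrow> E (\<phi> x) (\<phi> y))"

definition iso_unique_zf :: "'a set \<Rightarrow> ('a \<Rightarrow> 'a \<Rightarrow> bool) \<Rightarrow> bool" where
  "iso_unique_zf V E \<longleftrightarrow> (\<forall>A B. min_zero_forcing_set V E A \<and> min_zero_forcing_set V E B
      \<longrightarrow> (\<exists>\<phi>. automorphism V E \<phi> \<and> \<phi> ` A = B))"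

definition path_cover :: "'a set \<Rightarrow> ('a \<Rightarrow> 'a \<Rightarrow> bool) \<Rightarrow> 'a list set \<Rightarrow> bool" where
  "path_cover V E P \<longleftrightarrow> (\<forall>p\<in>P. is_path V E p)
      \<and> (\<forall>p\<in>P. \<forall>q\<in>P. p \<noteq> q \<longrightarrow> set p \<inter> set q = {})
      \<and> (\<Union>p\<in>P. set p) = V"

definition min_path_cover :: "'a set \<Rightarrow> ('a \<Rightarrow> 'a \<Rightarrow> bool) \<Rightarrow> 'a list set \<Rightarrow> bool" where
  "min_path_cover V E P \<longleftrightarrow> path_cover V E P \<and> finite P
      \<and> (\<forall>Q. path_cover V E Q \<and> finite Q \<longrightarrow> card P \<le> card Q)"

definition interior :: "'a list \<Rightarrow> 'a \<Rightarrow> bool" where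
  "interior p x \<longleftrightarrow> x \<in> set p \<and> x \<noteq> hd p \<and> x \<noteq> last p"

end

theory Submission
  imports Defs
begin


lemma is_walk_conv:
  "is_walk E xs \<longleftrightarrow> xs \<noteq> [] \<and> (\<forall>i. Suc i < length xs \<longrightarrow> E (xs!i) (xs!Suc i))"
proof (induction E xs rule: is_walk.induct)
  case (3 E x y zs)
  show ?case
  proof
    assume "is_walk E (x # y # zs)"
    then show "x # y # zs \<noteq> [] \<and> (\<forall>i. Suc i < length (x # y # zs) \<longrightarrow> E ((x # y # zs) ! i) ((x # y # zs) ! Suc i))"
      using 3 by (auto simp: nth_Cons split: nat.splits)
  next
    assume h: "x # y # zs \<noteq> [] \<and> (\<forall>i. Suc i < length (x # y # zs) \<longrightarrow> E ((x # y # zs) ! i) ((x # y # zs) ! Suc i))"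
    have "E x y" using h[THEN conjunct2, rule_format, of 0] by simp
    moreover have "\<forall>i. Suc i < length (y # zs) \<longrightarrow> E ((y # zs) ! i) ((y # zs) ! Suc i)"
      using h[THEN conjunct2, rule_format, of "Suc _"] by simp
    ultimately show "is_walk E (x # y # zs)" using 3 by simp
  qed
qed auto

lemma walk_append:
  assumes "xs \<noteq> []" "ys \<noteq> []"
  shows "is_walk E (xs @ ys) \<longleftrightarrow> is_walk E xs \<and> is_walk E ys \<and> E (last xs) (hd ys)"
  using assms
proof (induction xs)
  case (Cons x xs)
  then show ?case by (cases xs; cases ys) auto
qed auto

lemma walk_rev:
  assumes "\<forall>x y. E x y \<longrightarrow> E y x" "is_walk E xs"
  shows "is_walk E (rev xs)"
  using assms(2)
proof (induction xs)
  case (Cons x xs)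
  show ?case
  proof (cases xs)
    case Nil then show ?thesis by simp
  next
    case (Cons y zs)
    then show ?thesis using Cons.prems Cons.IH assms(1) walk_append[of "rev xs" "[x]" E] by auto
  qed
qed auto

lemma walk_drop: "is_walk E xs \<Longrightarrow> n < length xs \<Longrightarrow> is_walk E (drop n xs)"
  unfolding is_walk_conv by auto

lemma walk_take: "is_walk E xs \<Longrightarrow> 0 < n \<Longrightarrow> is_walk E (take n xs)"
  unfolding is_walk_conv by auto



lemma tree_graph: "tree V E \<Longrightarrow> graph V E" by (simp add: tree_def)
lemma tree_sym: "tree V E \<Longrightarrow> E x y \<Longrightarrow> E y x" by (simp add: tree_def graph_def)
lemma tree_irr: "tree V E \<Longrightarrow> \<not> E x x" by (simp add: tree_def graph_def)
lemma tree_V: "tree V E \<Longrightarrow> E x y \<Longrightarrow> x \<in> V \<and> y \<in> V" by (simp add: tree_def graph_def)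
lemma tree_fin: "tree V E \<Longrightarrow> finite V" by (simp add: tree_def graph_def)
lemma tree_nocyc: "tree V E \<Longrightarrow> \<not> is_cycle V E c" by (simp add: tree_def)

lemma sub_path:
  assumes "is_path V E r" "i \<le> k" "k < length r"
  shows "is_path V E (take (k-i+1) (drop i r))"
    and "hd (take (k-i+1) (drop i r)) = r!i"
    and "last (take (k-i+1) (drop i r)) = r!k"
    and "length (take (k-i+1) (drop i r)) = k-i+1"
    and "set (take (k-i+1) (drop i r)) \<subseteq> set r"
proof -
  have w: "is_walk E r" "distinct r" "set r \<subseteq> V" using assms(1) by (auto simp: is_path_def)
  show "is_path V E (take (k-i+1) (drop i r))"
    unfolding is_path_def
  proof (intro conjI)
    show "is_walk E (take (k - i + 1) (drop i r))"
      using w assms by (intro walk_take walk_drop) auto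
    show "distinct (take (k - i + 1) (drop i r))" using w by simp
    show "set (take (k - i + 1) (drop i r)) \<subseteq> V" using w
      by (meson set_drop_subset set_take_subset subset_trans)
  qed
  show "hd (take (k-i+1) (drop i r)) = r!i" using assms
    by (simp add: hd_drop_conv_nth)
  show "length (take (k-i+1) (drop i r)) = k-i+1" using assms by simp
  show "last (take (k-i+1) (drop i r)) = r!k" using assms
    by (simp add: last_conv_nth)
  show "set (take (k-i+1) (drop i r)) \<subseteq> set r"
    by (meson set_drop_subset set_take_subset subset_trans)
qed

lemma chord:
  assumes "tree V E" "is_path V E r" "i + 2 \<le> k" "k < length r" "E (r!i) (r!k)"
  shows False
proof -
  let ?c = "take (k-i+1) (drop i r)"
  have "is_cycle V E ?c"
    unfolding is_cycle_def using sub_path[OF assms(2), of i k] assms tree_sym[OF assms(1)] by auto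
  then show False using tree_nocyc[OF assms(1)] by blast
qed

lemma segment:
  assumes "tree V E" "is_path V E r" "a \<in> set r" "b \<in> set r" "a \<noteq> b"
  shows "\<exists>s. is_path V E s \<and> hd s = a \<and> last s = b \<and> set s \<subseteq> set r \<and> length s \<ge> 2"
proof -
  obtain i where i: "i < length r" "r!i = a" using assms(3) by (meson in_set_conv_nth)
  obtain k where k: "k < length r" "r!k = b" using assms(4) by (meson in_set_conv_nth)
  have "i \<noteq> k" using i k assms(5) by auto
  show ?thesis
  proof (cases "i < k")
    case True
    then show ?thesis using sub_path[OF assms(2), of i k] i k by (intro exI[of _ "take (k-i+1) (drop i r)"]) auto
  next
    case False
    then have "k < i" using \<open>i \<noteq> k\<close> by simp
    let ?s = "take (i-k+1) (drop k r)"
    have p: "is_path V E ?s" "hd ?s = b" "last ?s = a" "length ?s = i - k + 1" "set ?s \<subseteq> set r"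
      using sub_path[OF assms(2), of k i] i k \<open>k < i\<close> by auto
    have "is_path V E (rev ?s)" using p(1) walk_rev[of E] tree_sym[OF assms(1)]
      by (auto simp: is_path_def)
    moreover have "?s \<noteq> []" using p(4) by auto
    ultimately show ?thesis using p \<open>k < i\<close>
      by (intro exI[of _ "rev ?s"]) (auto simp: hd_rev last_rev)
  qed
qed



lemma nb_step:
  assumes "tree V E" "is_path V E w" "length w \<ge> 2" "E (last w) u" "u \<noteq> w!(length w - 2)"
  shows "u \<notin> set w"
proof
  assume "u \<in> set w"
  then obtain k where k: "k < length w" "w!k = u" by (meson in_set_conv_nth)
  have lw: "last w = w!(length w - 1)" using assms(3) by (subst last_conv_nth) auto
  have "k \<noteq> length w - 1" using k lw assms(4) tree_irr[OF assms(1)] by auto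
  moreover have "k \<noteq> length w - 2" using k assms(5) by auto
  ultimately have "k + 2 \<le> length w - 1" using k by auto
  moreover have "E (w!k) (w!(length w - 1))" using assms(4) k lw tree_sym[OF assms(1)] by auto
  moreover have "length w - 1 < length w" using assms(3) by auto
  ultimately show False using chord[OF assms(1,2), of k "length w - 1"] by auto
qed

lemma ext_path:
  assumes "tree V E" "is_path V E W" "length W \<ge> 2" "is_path V E s" "E (last W) (hd s)"
    "last W \<notin> set s" "W!(length W - 2) \<notin> set s"
  shows "is_path V E (W @ s)"
  using assms(4-7)
proof (induction s rule: rev_induct)
  case Nil
  then show ?case by (simp add: is_path_def)
next
  case (snoc u s0)
  have W: "is_walk E W" "distinct W" "set W \<subseteq> V" "W \<noteq> []" using assms(2,3) by (auto simp: is_path_def)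
  have su: "is_walk E (s0 @ [u])" "distinct (s0 @ [u])" "set (s0 @ [u]) \<subseteq> V" using snoc.prems by (auto simp: is_path_def)
  show ?case
  proof (cases "s0 = []")
    case True
    have "u \<notin> set W" using nb_step[OF assms(1,2,3), of u] snoc.prems True by auto
    then show ?thesis using True W su snoc.prems walk_append[of W "[u]" E] by (auto simp: is_path_def)
  next
    case False
    have s0: "is_path V E s0" using su False walk_append[of s0 "[u]" E] by (auto simp: is_path_def)
    have IH: "is_path V E (W @ s0)" using snoc.IH s0 snoc.prems False by auto
    have eu: "E (last s0) u" using su False walk_append[of s0 "[u]" E] by auto
    have un: "u \<notin> set s0" "u \<noteq> last W" using su snoc.prems by auto
    have "(W @ s0)!(length (W @ s0) - 2) \<in> set s0 \<or> (W @ s0)!(length (W @ s0) - 2) = last W"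
    proof (cases "length s0 \<ge> 2")
      case True
      then show ?thesis by (auto simp: nth_append)
    next
      case False
      then have "length s0 < 2" by simp
      then have "length s0 = 1" using \<open>s0 \<noteq> []\<close> by (cases s0) auto
      then show ?thesis using W by (auto simp: nth_append last_conv_nth)
    qed
    then have "u \<noteq> (W @ s0)!(length (W @ s0) - 2)" using un by auto
    then have "u \<notin> set (W @ s0)" using nb_step[OF assms(1) IH, of u] eu \<open>s0 \<noteq> []\<close> assms(3) by auto
    then show ?thesis using IH walk_append[of "W @ s0" "[u]" E] eu \<open>s0 \<noteq> []\<close> su
      by (auto simp: is_path_def)
  qed
qed

lemma zigzag:
  assumes "tree V E" "path_cover V E C"
    and good: "\<And>r a b. G r a b \<Longrightarrow> r \<in> C \<and> a \<in> set r \<and> b \<in> set r \<and> a \<noteq> b"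
    and step: "\<And>r a b. G r a b \<Longrightarrow> \<exists>r' a' b'. G r' a' b' \<and> r' \<noteq> r \<and> E b a'"
    and ne: "G r0 a0 b0"
  shows False
proof -
  have pc: "\<And>r. r \<in> C \<Longrightarrow> is_path V E r" "\<And>r r'. r \<in> C \<Longrightarrow> r' \<in> C \<Longrightarrow> r \<noteq> r' \<Longrightarrow> set r \<inter> set r' = {}"
    using assms(2) by (auto simp: path_cover_def)
  have "\<exists>W r a b. G r a b \<and> is_path V E W \<and> length W \<ge> n + 2 \<and> last W = b \<and> W!(length W - 2) \<in> set r" for n
  proof (induction n)
    case 0
    obtain s where s: "is_path V E s" "hd s = a0" "last s = b0" "set s \<subseteq> set r0" "length s \<ge> 2"
      using segment[OF assms(1) pc(1)] good[OF ne] by blast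
    have "s!(length s - 2) \<in> set r0" using s(5) s(4) by (auto intro!: subsetD[OF s(4)])
    then show ?case using s ne by (intro exI[of _ s] exI[of _ r0] exI[of _ a0] exI[of _ b0]) auto
  next
    case (Suc n)
    then obtain W r a b where h: "G r a b" "is_path V E W" "length W \<ge> n + 2" "last W = b" "W!(length W - 2) \<in> set r"
      by blast
    obtain r' a' b' where h2: "G r' a' b'" "r' \<noteq> r" "E b a'" using step[OF h(1)] by blast
    obtain s where s: "is_path V E s" "hd s = a'" "last s = b'" "set s \<subseteq> set r'" "length s \<ge> 2"
      using segment[OF assms(1) pc(1)] good[OF h2(1)] by blast
    have dis: "set r \<inter> set r' = {}" using pc(2) good h h2 by blast
    have "b \<in> set r" using good h by blast
    then have "last W \<notin> set s" "W!(length W - 2) \<notin> set s" using dis s h by auto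
    then have "is_path V E (W @ s)" using ext_path[OF assms(1) h(2) _ s(1)] h s h2 by auto
    moreover have "length (W @ s) \<ge> Suc n + 2" using h s by auto
    moreover have "last (W @ s) = b'" using s by (auto simp: last_append)
    moreover have "(W @ s)!(length (W @ s) - 2) \<in> set r'" using s
      by (auto simp: nth_append intro!: subsetD[OF s(4)])
    ultimately show ?case using h2 by blast
  qed
  then obtain W r a b where W: "is_path V E W" "length W \<ge> card V + 2" by blast
  have "length W = card (set W)" using W by (simp add: is_path_def distinct_card)
  also have "\<dots> \<le> card V" using W tree_fin[OF assms(1)] by (intro card_mono) (auto simp: is_path_def)
  finally show False using W by simp
qed



lemma chains:
  assumes "(force_step V E)\<^sup>*\<^sup>* S A" "S \<subseteq> V" "finite V"
  shows "\<exists>Ch. (\<forall>c\<in>Ch. is_path V E c) \<and> (\<forall>c\<in>Ch. \<forall>c'\<in>Ch. c \<noteq> c' \<longrightarrow> set c \<inter> set c' = {})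
     \<and> (\<Union>c\<in>Ch. set c) = A \<and> finite Ch \<and> card Ch \<le> card S
     \<and> (\<forall>c\<in>Ch. \<forall>i w. Suc i < length c \<longrightarrow> E (c!i) w \<longrightarrow> w \<in> V \<longrightarrow> w \<in> A)"
  using assms(1)
proof (induction rule: rtranclp_induct)
  case base
  have fS: "finite S" using assms(2,3) finite_subset by blast
  show ?case
    apply (rule exI[of _ "(\<lambda>s. [s]) ` S"])
    using assms(2) fS by (auto simp: is_path_def card_image_le)
next
  case (step A B)
  from step.IH obtain Ch where ch: "\<forall>c\<in>Ch. is_path V E c" "\<forall>c\<in>Ch. \<forall>c'\<in>Ch. c \<noteq> c' \<longrightarrow> set c \<inter> set c' = {}"
     "(\<Union>c\<in>Ch. set c) = A" "finite Ch" "card Ch \<le> card S"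
     "\<forall>c\<in>Ch. \<forall>i w. Suc i < length c \<longrightarrow> E (c!i) w \<longrightarrow> w \<in> V \<longrightarrow> w \<in> A" by blast
  from step.hyps(2) obtain u v where uv: "u \<in> A" "{w \<in> V. E u w \<and> w \<notin> A} = {v}" "B = insert v A"
    unfolding force_step_def by blast
  have v: "v \<in> V" "E u v" "v \<notin> A" using uv(2) by auto
  obtain c where c: "c \<in> Ch" "u \<in> set c" using uv(1) ch(3) by blast
  obtain k where k: "k < length c" "c!k = u" using c(2) by (meson in_set_conv_nth)
  have "\<not> Suc k < length c"
  proof
    assume "Suc k < length c"
    then have "v \<in> A" using ch(6) c(1) k v(1,2) by blast
    then show False using v(3) by blast
  qed
  then have kl: "k = length c - 1" using k by auto
  have cne: "c \<noteq> []" using k by auto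
  have lc: "last c = u" using kl k cne by (simp add: last_conv_nth)
  have pc: "is_path V E c" using ch c by blast
  have vc: "v \<notin> set c" using v c ch(3) by blast
  let ?c' = "c @ [v]"
  have pc': "is_path V E ?c'" using pc vc v lc walk_append[of c "[v]" E] cne by (auto simp: is_path_def)
  let ?Ch = "insert ?c' (Ch - {c})"
  show ?case
  proof (rule exI[of _ ?Ch], intro conjI)
    show "\<forall>c\<in>?Ch. is_path V E c" using pc' ch(1) by auto
    show "\<forall>c1\<in>?Ch. \<forall>c2\<in>?Ch. c1 \<noteq> c2 \<longrightarrow> set c1 \<inter> set c2 = {}"
    proof (intro ballI impI)
      fix c1 c2 assume h: "c1 \<in> ?Ch" "c2 \<in> ?Ch" "c1 \<noteq> c2"
      have dd: "d \<in> Ch - {c} \<Longrightarrow> set ?c' \<inter> set d = {}" for d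
        using ch(2) c(1) v(3) ch(3) by auto
      show "set c1 \<inter> set c2 = {}"
      proof (cases "c1 = ?c'")
        case True
        then show ?thesis using h dd[of c2] by auto
      next
        case False
        note F = this
        show ?thesis
        proof (cases "c2 = ?c'")
          case True
          then show ?thesis using h F dd[of c1] by auto
        next
          case False
          then have "c1 \<in> Ch" "c2 \<in> Ch" using h F by auto
          then show ?thesis using ch(2) h(3) by blast
        qed
      qed
    qed
    show "(\<Union>c\<in>?Ch. set c) = B" using uv(3) ch(3) c(1) by auto
    show "finite ?Ch" using ch(4) by simp
    show "card ?Ch \<le> card S"
    proof -
      have "card ?Ch \<le> Suc (card (Ch - {c}))" using ch(4) by (simp add: card_insert_le_m1)
      also have "\<dots> = card Ch" using ch(4) c(1)
      proof -
        have "card Ch > 0" using ch(4) c(1) card_gt_0_iff by blast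
        then show ?thesis using ch(4) c(1) by (simp add: card_Diff_singleton)
      qed
      finally show ?thesis using ch(5) by simp
    qed
    show "\<forall>c1\<in>?Ch. \<forall>i w. Suc i < length c1 \<longrightarrow> E (c1!i) w \<longrightarrow> w \<in> V \<longrightarrow> w \<in> B"
    proof (intro ballI allI impI)
      fix c1 i w assume h: "c1 \<in> ?Ch" "Suc i < length c1" "E (c1!i) w" "w \<in> V"
      show "w \<in> B"
      proof (cases "c1 = ?c'")
        case True
        then have il: "i < length c" using h by auto
        then have ci: "c1!i = c!i" using True by (simp add: nth_append)
        show ?thesis
        proof (cases "Suc i < length c")
          case True
          then show ?thesis using ch(6) c(1) h ci uv(3) by auto
        next
          case False
          then have "i = k" using il kl by auto
          then have "E u w" using h ci k by auto
          then show ?thesis using uv(2,3) h(4) by auto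
        qed
      next
        case False
        then show ?thesis using h ch(6) uv(3) by auto
      qed
    qed
  qed
qed

lemma zf_lower:
  assumes "tree V E" "min_path_cover V E P" "zero_forcing_set V E S"
  shows "card P \<le> card S"
proof -
  obtain Ch where ch: "\<forall>c\<in>Ch. is_path V E c" "\<forall>c\<in>Ch. \<forall>c'\<in>Ch. c \<noteq> c' \<longrightarrow> set c \<inter> set c' = {}"
     "(\<Union>c\<in>Ch. set c) = V" "finite Ch" "card Ch \<le> card S"
    using chains[of V E S V] assms(3) tree_fin[OF assms(1)] unfolding zero_forcing_set_def by blast
  have "path_cover V E Ch" using ch unfolding path_cover_def by blast
  then have "card P \<le> card Ch" using assms(2) ch(4) unfolding min_path_cover_def by blast
  then show ?thesis using ch(5) by simp
qed



lemma reach_sub: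
  assumes "(force_step V E)\<^sup>*\<^sup>* S A" "S \<subseteq> V"
  shows "S \<subseteq> A \<and> A \<subseteq> V"
  using assms(1)
proof (induction rule: rtranclp_induct)
  case base then show ?case using assms(2) by simp
next
  case (step A B)
  then show ?case unfolding force_step_def by auto
qed

lemma pc_facts:
  assumes "path_cover V E C"
  shows "\<And>r. r \<in> C \<Longrightarrow> is_path V E r"
    and "\<And>r r'. r \<in> C \<Longrightarrow> r' \<in> C \<Longrightarrow> r \<noteq> r' \<Longrightarrow> set r \<inter> set r' = {}"
    and "\<And>v. v \<in> V \<Longrightarrow> \<exists>r\<in>C. v \<in> set r"
    and "\<And>r. r \<in> C \<Longrightarrow> r \<noteq> []"
    and "\<And>r. r \<in> C \<Longrightarrow> set r \<subseteq> V"
  using assms unfolding path_cover_def is_path_def by auto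

lemma endpoint_zf:
  assumes "tree V E" "path_cover V E C"
  shows "zero_forcing_set V E (hd ` C)"
proof -
  note pc = pc_facts[OF assms(2)]
  let ?S = "hd ` C"
  have SV: "?S \<subseteq> V" using pc(4,5) by fastforce
  have fV: "finite V" using tree_fin[OF assms(1)] .
  let ?R = "\<lambda>A. (force_step V E)\<^sup>*\<^sup>* ?S A"
  have bnd: "\<forall>A. ?R A \<longrightarrow> card A < card V + 1"
  proof (intro allI impI)
    fix A assume "?R A"
    then have "A \<subseteq> V" using reach_sub[OF _ SV] by blast
    then have "card A \<le> card V" using fV by (rule card_mono[rotated])
    then show "card A < card V + 1" by simp
  qed
  obtain Am where Am: "?R Am" "\<And>B. ?R B \<Longrightarrow> card B \<le> card Am"
    using ex_has_greatest_nat[of ?R ?S card, OF _ bnd] by blast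
  have AmV: "?S \<subseteq> Am" "Am \<subseteq> V" using reach_sub[OF Am(1) SV] by auto
  have finAm: "finite Am" using AmV fV finite_subset by blast
  have nof: "\<not> force_step V E Am B" for B
  proof
    assume f: "force_step V E Am B"
    then have "?R B" using Am(1) by (meson rtranclp.rtrancl_into_rtrancl)
    moreover from f obtain u v where "{w \<in> V. E u w \<and> w \<notin> Am} = {v}" "B = insert v Am"
      unfolding force_step_def by blast
    then have "card B = Suc (card Am)" using finAm by (metis (mono_tags, lifting) card_insert_disjoint insertI1 mem_Collect_eq)
    ultimately show False using Am(2) by fastforce
  qed
  have "Am = V"
  proof (rule ccontr)
    assume "Am \<noteq> V"
    then obtain v0 where v0: "v0 \<in> V" "v0 \<notin> Am" using AmV by blast
    define G where "G r a b \<longleftrightarrow> r \<in> C \<and> a \<in> set r \<and> a \<notin> Am \<and>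
       (\<exists>i. Suc i < length r \<and> b = r!i \<and> r!Suc i \<notin> Am \<and> (\<forall>j\<le>i. r!j \<in> Am))" for r a b
    have stuck: "\<exists>b. G r a b" if h: "r \<in> C" "a \<in> set r" "a \<notin> Am" for r a
    proof -
      define P where "P k \<longleftrightarrow> k < length r \<and> r!k \<notin> Am" for k
      obtain k0 where "P k0" using h unfolding P_def by (metis in_set_conv_nth)
      define k where "k = (LEAST k. P k)"
      have Pk: "P k" unfolding k_def using \<open>P k0\<close> by (rule LeastI)
      have lt: "j < k \<Longrightarrow> \<not> P j" for j unfolding k_def by (rule not_less_Least)
      have "r!0 \<in> Am" using h(1) pc(4) AmV(1) by (metis hd_conv_nth image_eqI subsetD)
      then have "k \<noteq> 0" using Pk unfolding P_def by (metis)
      then obtain i where i: "k = Suc i" by (cases k) auto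
      have "\<forall>j\<le>i. r!j \<in> Am" using lt Pk i unfolding P_def by auto
      then show ?thesis unfolding G_def using h Pk i unfolding P_def by blast
    qed
    obtain r0 where r0: "r0 \<in> C" "v0 \<in> set r0" using pc(3) v0 by blast
    show False
    proof (rule zigzag[OF assms(1,2), of G r0 v0 "SOME b. G r0 v0 b"])
      fix r a b assume "G r a b"
      then show "r \<in> C \<and> a \<in> set r \<and> b \<in> set r \<and> a \<noteq> b" unfolding G_def by auto
    next
      fix r a b assume g: "G r a b"
      then obtain i where i: "r \<in> C" "Suc i < length r" "b = r!i" "r!Suc i \<notin> Am" "\<forall>j\<le>i. r!j \<in> Am"
        unfolding G_def by blast
      have pr: "is_path V E r" using pc(1) i(1) .
      have bA: "b \<in> Am" using i by auto
      have ev: "E b (r!Suc i)" using pr i unfolding is_path_def is_walk_conv by auto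
      have vV: "r!Suc i \<in> V" using pr i unfolding is_path_def by (meson nth_mem subsetD)
      have "{w \<in> V. E b w \<and> w \<notin> Am} \<noteq> {r!Suc i}" using nof bA unfolding force_step_def by blast
      moreover have "r!Suc i \<in> {w \<in> V. E b w \<and> w \<notin> Am}" using ev vV i by auto
      ultimately obtain t where t: "t \<in> V" "E b t" "t \<notin> Am" "t \<noteq> r!Suc i" by blast
      obtain r' where r': "r' \<in> C" "t \<in> set r'" using pc(3) t(1) by blast
      have "r' \<noteq> r"
      proof
        assume "r' = r"
        then obtain k where k: "k < length r" "r!k = t" using r' by (meson in_set_conv_nth)
        have "k > i" using i(5) k t(3) by (meson leI)
        then have "i + 2 \<le> k" using k t(4) by (cases "k = Suc i") auto
        then show False using chord[OF assms(1) pr, of i k] k t(2) i(3) by auto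
      qed
      moreover obtain b' where "G r' t b'" using stuck r' t by blast
      ultimately show "\<exists>r' a' b'. G r' a' b' \<and> r' \<noteq> r \<and> E b a'" using t(2) by blast
    next
      show "G r0 v0 (SOME b. G r0 v0 b)" using stuck r0 v0 by (meson someI)
    qed
  qed
  then show ?thesis unfolding zero_forcing_set_def using Am(1) SV by simp
qed



definition leaf :: "('a \<Rightarrow> 'a \<Rightarrow> bool) \<Rightarrow> 'a \<Rightarrow> bool" where
  "leaf E v \<longleftrightarrow> (\<exists>w. E v w \<and> (\<forall>w'. E v w' \<longrightarrow> w' = w))"

lemma hd_inj:
  assumes "path_cover V E C"
  shows "inj_on hd C"
proof
  fix r r' assume h: "r \<in> C" "r' \<in> C" "hd r = hd r'"
  note pc = pc_facts[OF assms]
  show "r = r'"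
  proof (rule ccontr)
    assume "r \<noteq> r'"
    then have "set r \<inter> set r' = {}" using pc(2) h by blast
    moreover have "hd r \<in> set r" "hd r' \<in> set r'" using pc(4) h by (metis hd_in_set)+
    ultimately show False using h by auto
  qed
qed

lemma min_zf_hd:
  assumes "tree V E" "min_path_cover V E C"
  shows "min_zero_forcing_set V E (hd ` C)"
proof -
  have pc: "path_cover V E C" using assms(2) by (simp add: min_path_cover_def)
  have "card (hd ` C) = card C" using hd_inj[OF pc] by (simp add: card_image)
  then show ?thesis unfolding min_zero_forcing_set_def
    using endpoint_zf[OF assms(1) pc] zf_lower[OF assms(1,2)] by simp
qed

lemma leaf_auto:
  assumes "tree V E" "automorphism V E \<phi>" "v \<in> V"
  shows "leaf E (\<phi> v) \<longleftrightarrow> leaf E v"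
proof -
  have bij: "bij_betw \<phi> V V" and ad: "\<forall>x\<in>V. \<forall>y\<in>V. E x y \<longleftrightarrow> E (\<phi> x) (\<phi> y)"
    using assms(2) unfolding automorphism_def by blast+
  have img: "\<phi> ` V = V" and inj: "inj_on \<phi> V" using bij by (auto simp: bij_betw_def)
  have EV: "E x y \<Longrightarrow> x \<in> V \<and> y \<in> V" for x y using tree_V[OF assms(1)] by blast
  have pv: "\<phi> v \<in> V" using img assms(3) by blast
  show ?thesis
  proof
    assume "leaf E (\<phi> v)"
    then obtain w where w: "E (\<phi> v) w" "\<forall>w'. E (\<phi> v) w' \<longrightarrow> w' = w" unfolding leaf_def by blast
    have "w \<in> V" using EV w(1) by blast
    then obtain w1 where w1: "w1 \<in> V" "\<phi> w1 = w" using img by (metis imageE)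
    have "E v w1" using ad[rule_format, OF assms(3) w1(1)] w1 w(1) by simp
    moreover have "\<forall>w'. E v w' \<longrightarrow> w' = w1"
    proof (intro allI impI)
      fix w' assume "E v w'"
      then have "w' \<in> V" using EV by blast
      then have "E (\<phi> v) (\<phi> w')" using ad[rule_format, OF assms(3)] \<open>E v w'\<close> by simp
      then have "\<phi> w' = \<phi> w1" using w w1 by auto
      then show "w' = w1" using inj \<open>w' \<in> V\<close> w1(1) by (meson inj_onD)
    qed
    ultimately show "leaf E v" unfolding leaf_def by blast
  next
    assume "leaf E v"
    then obtain w where w: "E v w" "\<forall>w'. E v w' \<longrightarrow> w' = w" unfolding leaf_def by blast
    have wV: "w \<in> V" using EV w(1) by blast
    have "E (\<phi> v) (\<phi> w)" using ad[rule_format, OF assms(3) wV] w(1) by simp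
    moreover have "\<forall>z. E (\<phi> v) z \<longrightarrow> z = \<phi> w"
    proof (intro allI impI)
      fix z assume z: "E (\<phi> v) z"
      then have "z \<in> V" using EV by blast
      then obtain z1 where z1: "z1 \<in> V" "\<phi> z1 = z" using img by (metis imageE)
      then have "E v z1" using ad[rule_format, OF assms(3) z1(1)] z by simp
      then show "z = \<phi> w" using w z1 by auto
    qed
    ultimately show "leaf E (\<phi> v)" unfolding leaf_def by blast
  qed
qed

lemma leaf_card:
  assumes "tree V E" "automorphism V E \<phi>" "\<phi> ` A = B" "A \<subseteq> V"
  shows "card {a\<in>A. leaf E a} = card {b\<in>B. leaf E b}"
proof -
  have inj: "inj_on \<phi> V" using assms(2) unfolding automorphism_def bij_betw_def by (elim conjE)
  have la: "a \<in> A \<Longrightarrow> leaf E (\<phi> a) \<longleftrightarrow> leaf E a" for a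
    using leaf_auto[OF assms(1,2)] assms(4) by (meson subsetD)
  have "\<phi> ` {a\<in>A. leaf E a} = {b\<in>B. leaf E b}"
  proof
    show "\<phi> ` {a\<in>A. leaf E a} \<subseteq> {b\<in>B. leaf E b}" using la assms(3) by auto
    show "{b\<in>B. leaf E b} \<subseteq> \<phi> ` {a\<in>A. leaf E a}"
    proof
      fix b assume "b \<in> {b\<in>B. leaf E b}"
      then obtain a where "a \<in> A" "\<phi> a = b" "leaf E b" using assms(3) by blast
      then show "b \<in> \<phi> ` {a\<in>A. leaf E a}" using la by auto
    qed
  qed
  moreover have "inj_on \<phi> {a\<in>A. leaf E a}" using assms(4) by (intro inj_on_subset[OF inj]) auto
  ultimately show ?thesis by (metis card_image)
qed

lemma pc_replace:
  assumes "path_cover V E C" "D \<subseteq> C" "\<forall>n\<in>N. is_path V E n"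
    "\<forall>n\<in>N. \<forall>n'\<in>N. n \<noteq> n' \<longrightarrow> set n \<inter> set n' = {}"
    "(\<Union>n\<in>N. set n) = (\<Union>d\<in>D. set d)"
  shows "path_cover V E (N \<union> (C - D))"
proof -
  note pc = pc_facts[OF assms(1)]
  have d1: "set n \<inter> set c = {}" if "n \<in> N" "c \<in> C - D" for n c
  proof -
    have "set n \<subseteq> (\<Union>d\<in>D. set d)" using assms(5) that by blast
    moreover have "\<forall>d\<in>D. set d \<inter> set c = {}" using pc(2) assms(2) that by blast
    ultimately show ?thesis by blast
  qed
  show ?thesis unfolding path_cover_def
  proof (intro conjI)
    show "\<forall>p\<in>N \<union> (C - D). is_path V E p" using assms(3) pc(1) by blast
    show "\<forall>p\<in>N \<union> (C - D). \<forall>q\<in>N \<union> (C - D). p \<noteq> q \<longrightarrow> set p \<inter> set q = {}"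
      using d1 assms(4) pc(2) by (metis DiffE Int_commute UnE)
    have "(\<Union>p\<in>C. set p) = V" using assms(1) by (simp add: path_cover_def)
    then show "(\<Union>p\<in>N \<union> (C - D). set p) = V" using assms(2,5) by blast
  qed
qed

lemma card_replace:
  assumes "finite C" "D \<subseteq> C" "finite N"
  shows "card (N \<union> (C - D)) \<le> card N + card C - card D"
proof -
  have "card (N \<union> (C - D)) \<le> card N + card (C - D)" by (rule card_Un_le)
  also have "card (C - D) = card C - card D" using assms by (simp add: card_Diff_subset finite_subset)
  moreover have "card D \<le> card C" using assms by (simp add: card_mono)
  ultimately show ?thesis by simp
qed

lemma min_transfer:
  assumes "min_path_cover V E C" "path_cover V E C'" "finite C'" "card C' \<le> card C"
  shows "min_path_cover V E C'"
  using assms unfolding min_path_cover_def by (meson le_trans)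

lemma rev_path:
  assumes "tree V E" "is_path V E r"
  shows "is_path V E (rev r)"
  using assms walk_rev[of E r] tree_sym[OF assms(1)] by (auto simp: is_path_def)

lemma flip_cover:
  assumes "tree V E" "min_path_cover V E C" "r \<in> C"
  shows "min_path_cover V E ({rev r} \<union> (C - {r}))"
proof -
  have pc: "path_cover V E C" and fC: "finite C" using assms(2) by (auto simp: min_path_cover_def)
  have "path_cover V E ({rev r} \<union> (C - {r}))"
    using pc_replace[OF pc, of "{r}" "{rev r}"] assms rev_path[OF assms(1) pc_facts(1)[OF pc]] by auto
  moreover have "card ({rev r} \<union> (C - {r})) \<le> card C"
    using card_replace[OF fC, of "{r}" "{rev r}"] assms(3) by simp
  ultimately show ?thesis using min_transfer[OF assms(2)] fC by simp
qed



lemma flip: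
  assumes "tree V E" "iso_unique_zf V E" "min_path_cover V E C" "r \<in> C"
  shows "leaf E (hd r) \<longleftrightarrow> leaf E (last r)"
proof -
  have pc: "path_cover V E C" and fC: "finite C" using assms(3) by (auto simp: min_path_cover_def)
  note pcf = pc_facts[OF pc]
  let ?C' = "{rev r} \<union> (C - {r})"
  have m': "min_path_cover V E ?C'" using flip_cover[OF assms(1,3,4)] .
  let ?S0 = "hd ` (C - {r})"
  have rne: "r \<noteq> []" using pcf(4) assms(4) .
  have A: "hd ` C = insert (hd r) ?S0" using assms(4) by blast
  have B: "hd ` ?C' = insert (last r) ?S0" using rne by (simp add: hd_rev)
  have nS: "hd r \<notin> ?S0" "last r \<notin> ?S0"
  proof -
    have "\<And>r'. r' \<in> C - {r} \<Longrightarrow> hd r' \<in> set r' \<and> set r \<inter> set r' = {}"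
    proof -
      fix r' assume "r' \<in> C - {r}"
      then have "r' \<in> C" "r' \<noteq> r" by auto
      then show "hd r' \<in> set r' \<and> set r \<inter> set r' = {}"
        using pcf(2)[OF assms(4), of r'] pcf(4)[of r'] by auto
    qed
    note H = this
    have "hd r \<in> set r" "last r \<in> set r" using rne by auto
    note I = this
    show "hd r \<notin> ?S0"
    proof
      assume "hd r \<in> ?S0"
      then obtain r' where "r' \<in> C - {r}" "hd r = hd r'" by blast
      then have "hd r' \<in> set r'" "set r \<inter> set r' = {}" using H[of r'] by blast+
      then show False using I \<open>hd r = hd r'\<close> by (metis disjoint_iff)
    qed
    show "last r \<notin> ?S0"
    proof
      assume "last r \<in> ?S0"
      then obtain r' where "r' \<in> C - {r}" "last r = hd r'" by blast
      then have "hd r' \<in> set r'" "set r \<inter> set r' = {}" using H[of r'] by blast+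
      then show False using I \<open>last r = hd r'\<close> by (metis disjoint_iff)
    qed
  qed
  have fS: "finite ?S0" using fC by simp
  obtain \<phi> where phi: "automorphism V E \<phi>" "\<phi> ` (hd ` C) = hd ` ?C'"
  proof -
    have "\<forall>A B. min_zero_forcing_set V E A \<and> min_zero_forcing_set V E B \<longrightarrow> (\<exists>\<phi>. automorphism V E \<phi> \<and> \<phi> ` A = B)"
      using assms(2) unfolding iso_unique_zf_def .
    then have "\<exists>\<phi>. automorphism V E \<phi> \<and> \<phi> ` (hd ` C) = hd ` ?C'"
      using min_zf_hd[OF assms(1,3)] min_zf_hd[OF assms(1) m'] by blast
    then show ?thesis using that by blast
  qed
  have "hd ` C \<subseteq> V" using pcf(4,5) by fastforce
  then have eq: "card {a\<in>hd ` C. leaf E a} = card {b\<in>hd ` ?C'. leaf E b}"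
    using leaf_card[OF assms(1) phi] by blast
  have cins: "x \<notin> ?S0 \<Longrightarrow> card {a\<in>insert x ?S0. leaf E a} = card {a\<in>?S0. leaf E a} + (if leaf E x then 1 else 0)" for x
  proof -
    assume "x \<notin> ?S0"
    have f: "finite {a\<in>?S0. leaf E a}" using fS by simp
    show ?thesis
    proof (cases "leaf E x")
      case True
      then have "{a\<in>insert x ?S0. leaf E a} = insert x {a\<in>?S0. leaf E a}" by auto
      then show ?thesis using True f \<open>x \<notin> ?S0\<close> by simp
    next
      case False
      then have "{a\<in>insert x ?S0. leaf E a} = {a\<in>?S0. leaf E a}" by auto
      then show ?thesis using False by simp
    qed
  qed
  have e1: "card {a\<in>hd ` C. leaf E a} = card {a\<in>?S0. leaf E a} + (if leaf E (hd r) then 1 else 0)"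
    unfolding A by (rule cins[OF nS(1)])
  have e2: "card {a\<in>hd ` ?C'. leaf E a} = card {a\<in>?S0. leaf E a} + (if leaf E (last r) then 1 else 0)"
    unfolding B by (rule cins[OF nS(2)])
  have "(if leaf E (hd r) then 1 else 0) = (if leaf E (last r) then (1::nat) else 0)"
    using eq e1 e2 by linarith
  then show ?thesis by (simp split: if_splits)
qed

lemma merge_false:
  assumes "tree V E" "min_path_cover V E C" "r1 \<in> C" "r2 \<in> C" "r1 \<noteq> r2"
    "u = hd r1 \<or> u = last r1" "v = hd r2 \<or> v = last r2" "E u v"
  shows False
proof -
  have pc: "path_cover V E C" and fC: "finite C" using assms(2) by (auto simp: min_path_cover_def)
  note pcf = pc_facts[OF pc]
  define a where "a = (if last r1 = u then r1 else rev r1)"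
  define b where "b = (if hd r2 = v then r2 else rev r2)"
  have ne: "r1 \<noteq> []" "r2 \<noteq> []" using pcf(4) assms by auto
  have pa: "is_path V E a" "last a = u" "set a = set r1" "a \<noteq> []"
    unfolding a_def using rev_path[OF assms(1) pcf(1)] pcf(1) assms(3,6) ne by (auto simp: last_rev)
  have pb: "is_path V E b" "hd b = v" "set b = set r2" "b \<noteq> []"
    unfolding b_def using rev_path[OF assms(1) pcf(1)] pcf(1) assms(4,7) ne by (auto simp: hd_rev)
  have dis: "set r1 \<inter> set r2 = {}" using pcf(2) assms by blast
  have pm: "is_path V E (a @ b)" using pa pb dis walk_append[of a b E] assms(8)
    by (auto simp: is_path_def)
  have "path_cover V E ({a @ b} \<union> (C - {r1, r2}))"
    using pc_replace[OF pc, of "{r1, r2}" "{a @ b}"] assms pm pa pb by auto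
  moreover have "card ({a @ b} \<union> (C - {r1, r2})) < card C"
  proof -
    have "card ({a @ b} \<union> (C - {r1, r2})) \<le> 1 + card C - card {r1, r2}"
      using card_replace[OF fC, of "{r1, r2}" "{a @ b}"] assms(3,4) by simp
    moreover have "card {r1, r2} = 2" using assms(5) by simp
    moreover have "card C \<ge> 2" using assms(3,4,5) fC
      by (metis \<open>card {r1, r2} = 2\<close> card_mono empty_subsetI insert_subset)
    ultimately show ?thesis by simp
  qed
  ultimately show False using assms(2) fC unfolding min_path_cover_def by (meson finite_Diff finite_UnI finite.intros leD)
qed


lemma end_nbr:
  assumes "is_path V E p" "length p \<ge> 2" "x = hd p \<or> x = last p" "\<forall>a b. E a b \<longrightarrow> E b a"
  shows "\<exists>z\<in>set p. E x z"
proof -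
  have w: "\<forall>i. Suc i < length p \<longrightarrow> E (p!i) (p!Suc i)" "p \<noteq> []"
    using assms(1) unfolding is_path_def is_walk_conv by auto
  show ?thesis
  proof (cases "x = hd p")
    case True
    then have "E x (p!1)" using w assms(2) by (simp add: hd_conv_nth)
    then show ?thesis using assms(2) by (meson nth_mem less_le_trans one_less_numeral_iff semiring_norm(76))
  next
    case False
    then have x: "x = p!(length p - 1)" using assms(3) w(2) by (simp add: last_conv_nth)
    have "E (p!(length p - 2)) (p!Suc (length p - 2))" using w assms(2) by auto
    moreover have "Suc (length p - 2) = length p - 1" using assms(2) by auto
    ultimately have "E x (p!(length p - 2))" using x assms(4) by metis
    then show ?thesis using assms(2) by (meson nth_mem diff_less zero_less_numeral less_le_trans zero_less_two)
  qed
qed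

lemma hdq_nonleaf:
  assumes "tree V E" "iso_unique_zf V E" "min_path_cover V E P"
    "p \<in> P" "q \<in> P" "p \<noteq> q" "x = hd p \<or> x = last p" "length p \<ge> 2" "E x y" "interior q y"
  shows "\<not> leaf E (hd q)"
proof -
  have pc: "path_cover V E P" and fP: "finite P" using assms(3) by (auto simp: min_path_cover_def)
  note pcf = pc_facts[OF pc]
  have sym: "\<forall>a b. E a b \<longrightarrow> E b a" using tree_sym[OF assms(1)] by blast
  have dis: "set p \<inter> set q = {}" using pcf(2) assms(4,5,6) by blast
  have yq: "y \<in> set q" "y \<noteq> hd q" "y \<noteq> last q" using assms(10) by (auto simp: interior_def)
  have pp: "is_path V E p" "is_path V E q" using pcf(1) assms(4,5) by auto
  obtain z where z: "z \<in> set p" "E x z" using end_nbr[OF pp(1) assms(8,7) sym] by blast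
  have "z \<noteq> y" using z yq dis by blast
  then have nlx: "\<not> leaf E x" using z(2) assms(9) unfolding leaf_def by blast
  have fl: "leaf E (hd p) \<longleftrightarrow> leaf E (last p)" using flip[OF assms(1,2,3,4)] .
  have nl: "\<not> leaf E (hd p)" "\<not> leaf E (last p)" using nlx fl assms(7) by auto
  define p0 where "p0 = (if x = last p then p else rev p)"
  have pne: "p \<noteq> []" using assms(8) by auto
  have p0: "is_path V E p0" "last p0 = x" "set p0 = set p" "\<not> leaf E (hd p0)" "p0 \<noteq> []"
    unfolding p0_def using rev_path[OF assms(1) pp(1)] pp(1) assms(7) nl pne
    by (auto simp: last_rev hd_rev)
  obtain j where j: "j < length q" "q!j = y" using yq(1) by (metis in_set_conv_nth)
  have qne: "q \<noteq> []" using j by auto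
  have j0: "j \<noteq> 0" using j yq qne by (metis hd_conv_nth)
  have jl: "j \<noteq> length q - 1" using j yq qne by (metis last_conv_nth)
  define p' where "p' = p0 @ drop j q"
  define q' where "q' = take j q"
  have dq: "is_walk E (drop j q)" "hd (drop j q) = y" "drop j q \<noteq> []" "last (drop j q) = last q"
    using walk_drop[of E q j] pp(2) j by (auto simp: is_path_def hd_drop_conv_nth)
  have sdq: "set (drop j q) \<subseteq> set q" "set (take j q) \<subseteq> set q" by (auto dest: in_set_dropD in_set_takeD)
  have dtq: "set (take j q) \<inter> set (drop j q) = {}"
    using pp(2) by (simp add: is_path_def set_take_disj_set_drop_if_distinct)
  have pp': "is_path V E p'" unfolding p'_def is_path_def
  proof (intro conjI)
    show "is_walk E (p0 @ drop j q)" using walk_append[of p0 "drop j q" E] p0 dq assms(9)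
      by (auto simp: is_path_def)
    show "distinct (p0 @ drop j q)" using p0 pp dis sdq by (auto simp: is_path_def)
    show "set (p0 @ drop j q) \<subseteq> V" using p0 pp sdq by (auto simp: is_path_def)
  qed
  have pq': "is_path V E q'" unfolding q'_def is_path_def
    using walk_take[of E q j] pp(2) j0 sdq by (auto simp: is_path_def)
  have dis': "set p' \<inter> set q' = {}" unfolding p'_def q'_def using dis p0(3) sdq dtq by auto
  have un: "set p' \<union> set q' = set p \<union> set q" unfolding p'_def q'_def using p0(3)
    by (metis Un_assoc Un_commute append_take_drop_id set_append)
  let ?P1 = "{p', q'} \<union> (P - {p, q})"
  have "path_cover V E ?P1"
    using pc_replace[OF pc, of "{p, q}" "{p', q'}"] assms(4,5) pp' pq' dis' un by (auto simp: Int_commute)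
  moreover have "card ?P1 \<le> card P"
  proof -
    have "card ?P1 \<le> card {p', q'} + card P - card {p, q}"
      using card_replace[OF fP, of "{p, q}" "{p', q'}"] assms(4,5) by simp
    moreover have "card {p, q} = 2" using assms(6) by simp
    moreover have "card {p', q'} \<le> 2" by (simp add: card_insert_le_m1)
    moreover have "card P \<ge> 2" using assms(4,5) fP \<open>card {p, q} = 2\<close>
      by (metis card_mono empty_subsetI insert_subset)
    ultimately show ?thesis by simp
  qed
  ultimately have m1: "min_path_cover V E ?P1" using min_transfer[OF assms(3)] fP by simp
  have "leaf E (hd p') \<longleftrightarrow> leaf E (last p')" using flip[OF assms(1,2) m1] by simp
  moreover have "hd p' = hd p0" "last p' = last q" unfolding p'_def using p0(5) dq by auto
  ultimately have "\<not> leaf E (last q)" using p0(4) by simp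
  then show ?thesis using flip[OF assms(1,2,3,5)] by simp
qed



lemma interior_len:
  assumes "interior q a"
  shows "length q \<ge> 2"
proof (rule ccontr)
  assume "\<not> length q \<ge> 2"
  then have "length q \<le> 1" by simp
  moreover have "q \<noteq> []" using assms by (auto simp: interior_def)
  ultimately obtain c where "q = [c]" by (cases q) auto
  then show False using assms by (auto simp: interior_def)
qed

lemma config_false:
  assumes "tree V E" "iso_unique_zf V E" "min_path_cover V E P"
    "p \<in> P" "q \<in> P" "p \<noteq> q" "x = hd p \<or> x = last p" "length p \<ge> 2" "E x y" "interior q y"
  shows False
proof -
  have pc: "path_cover V E P" using assms(3) by (auto simp: min_path_cover_def)
  note pcf = pc_facts[OF pc]
  define G where "G q a b \<longleftrightarrow> q \<in> P \<and> interior q a \<and> b = hd q \<and>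
     (\<exists>p x. p \<in> P \<and> p \<noteq> q \<and> (x = hd p \<or> x = last p) \<and> length p \<ge> 2 \<and> E x a)" for q a b
  show False
  proof (rule zigzag[OF assms(1) pc, of G q y "hd q"])
    fix r a b assume "G r a b"
    then show "r \<in> P \<and> a \<in> set r \<and> b \<in> set r \<and> a \<noteq> b"
      unfolding G_def interior_def by (auto intro: hd_in_set)
  next
    show "G q y (hd q)" unfolding G_def using assms by blast
  next
    fix q a b assume g: "G q a b"
    then obtain p x where h: "q \<in> P" "interior q a" "b = hd q" "p \<in> P" "p \<noteq> q" "x = hd p \<or> x = last p"
       "length p \<ge> 2" "E x a" unfolding G_def by blast
    have nl: "\<not> leaf E (hd q)" using hdq_nonleaf[OF assms(1,2,3) h(4,1) h(5) h(6,7,8,2)] .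
    have lq: "length q \<ge> 2" using interior_len[OF h(2)] .
    have pq: "is_path V E q" using pcf(1) h(1) .
    have qne: "q \<noteq> []" using lq by auto
    have e1: "E (hd q) (q!1)" using pq lq qne unfolding is_path_def is_walk_conv
      by (metis One_nat_def hd_conv_nth less_le_trans lessI numeral_2_eq_2)
    obtain w where w: "E (hd q) w" "w \<noteq> q!1" using nl e1 unfolding leaf_def by blast
    have wV: "w \<in> V" using tree_V[OF assms(1) w(1)] by blast
    obtain r where r: "r \<in> P" "w \<in> set r" using pcf(3) wV by blast
    have "r \<noteq> q"
    proof
      assume "r = q"
      then obtain k where k: "k < length q" "q!k = w" using r by (metis in_set_conv_nth)
      have "k \<noteq> 0" using k w(1) tree_irr[OF assms(1)] qne by (metis hd_conv_nth)
      moreover have "k \<noteq> 1" using k w by auto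
      ultimately have "0 + 2 \<le> k" by simp
      moreover have "E (q!0) (q!k)" using w(1) k qne by (simp add: hd_conv_nth)
      ultimately show False using chord[OF assms(1) pq, of 0 k] k by blast
    qed
    have "interior r w"
    proof (rule ccontr)
      assume "\<not> interior r w"
      then have "w = hd r \<or> w = last r" using r unfolding interior_def by blast
      then show False using merge_false[OF assms(1,3) h(1) r(1) \<open>r \<noteq> q\<close>[symmetric], of "hd q" w] w(1) by blast
    qed
    then have "G r w (hd r)" unfolding G_def using r h(1) \<open>r \<noteq> q\<close> lq w(1) by blast
    then show "\<exists>r' a' b'. G r' a' b' \<and> r' \<noteq> q \<and> E b a'" using \<open>r \<noteq> q\<close> w(1) h(3) by blast
  qed
qed

theorem lemma3p7:
  fixes V :: "'a set" and E :: "'a \<Rightarrow> 'a \<Rightarrow> bool" and P :: "'a list set"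
  assumes "tree V E" and "iso_unique_zf V E" and "min_path_cover V E P"
    and "p \<in> P" and "q \<in> P" and "p \<noteq> q"
    and "x \<in> set p" and "y \<in> set q" and "E x y"
  shows "(interior p x \<and> interior q y)
       \<or> (interior p x \<and> q = [y])
       \<or> (interior q y \<and> p = [x])"
proof -
  have ex: "\<not> interior p x \<Longrightarrow> x = hd p \<or> x = last p" using assms(7) unfolding interior_def by blast
  have ey: "\<not> interior q y \<Longrightarrow> y = hd q \<or> y = last q" using assms(8) unfolding interior_def by blast
  have len: "r \<noteq> [z] \<Longrightarrow> z \<in> set r \<Longrightarrow> length r \<ge> 2" for r :: "'a list" and z
    by (cases r) (auto simp: Suc_le_eq)
  have yx: "E y x" using tree_sym[OF assms(1) assms(9)] .
  show ?thesis
  proof (cases "interior p x")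
    case True
    show ?thesis
    proof (cases "interior q y")
      case False
      show ?thesis
      proof (cases "q = [y]")
        case False
        have False by (rule config_false[OF assms(1,2,3,5,4) assms(6)[symmetric] ey[OF \<open>\<not> interior q y\<close>] len[OF False assms(8)] yx True])
        then show ?thesis ..
      qed (use True in auto)
    qed (use True in auto)
  next
    case False
    note nx = this
    show ?thesis
    proof (cases "interior q y")
      case False
      have False by (rule merge_false[OF assms(1,3,4,5,6) ex[OF nx] ey[OF False] assms(9)])
      then show ?thesis ..
    next
      case True
      show ?thesis
      proof (cases "p = [x]")
        case False
        have False by (rule config_false[OF assms(1,2,3,4,5,6) ex[OF nx] len[OF False assms(7)] assms(9) True])
        then show ?thesis ..
      qed (use True in auto)
    qed
  qed
qed


end
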